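(* Let $\mathcal X=\{1,\dots,N\}$ with $N\ge 2$, let $T\ge1$, let $\mathrm{PWS}$ be a piecewise stationary source for sequences of length $T$ with complexity $C_{\mathrm{PWS}}$, and let $u$ be the uniform distribution on $\mathcal X$. Let $\mathrm{PS}$ be the Probability Smoothing model with fixed parameters $(\alpha,\varepsilon,p)$, where $0<\alpha<1$, $0\le\varepsilon\le1-\frac1N$ and $p$ is a distribution on $\mathcal X$ with $p(x)\ge\frac{\varepsilon}{N-1}$ for all $x$. Then for every sequence $x_{1:T}\in\mathcal X^T$, \[ \ell_{\mathrm{PS}}(x_{1:T})\le \ell_{\mathrm{PWS}}(x_{1:T})+\Big[\frac{\log\frac1{1-\varepsilon}}{\log\frac1\alpha}+N\log\frac1\alpha+(N+1)\log\frac1{1-\varepsilon}\Big]\cdot T+\frac{\log\frac N\varepsilon}{\log\frac1\alpha}\cdot C_{\mathrm{PWS}}+N\cdot D(u\parallel p). \]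
   Context: All logarithms are natural, with $\log\frac10=+\infty$ (so e.g. $\log\frac N\varepsilon=+\infty$ if $\varepsilon=0$). A model maps each finite sequence $x_{1:t}$ over $\mathcal X$ (including the empty sequence) to a distribution on $\mathcal X$; write $M(x;x_{1:t})$ for the probability it gives to $x$. The code length a model $M$ assigns is $\ell_M(x_{1:T})=\sum_{t=1}^T\log\frac1{M(x_t;x_{<t})}$, where $x_{<t}=x_{1:t-1}$. Probability Smoothing with fixed parameters $(\alpha,\varepsilon,p)$: $\mathrm{PS}(\cdot;\text{empty})=p$, and for $t\ge1$, $\mathrm{PS}(x;x_{1:t})=\alpha\,\mathrm{PS}(x;x_{<t})+(1-\alpha)(1-\varepsilon)$ if $x=x_t$, and $=\alpha\,\mathrm{PS}(x;x_{<t})+(1-\alpha)\frac{\varepsilon}{N-1}$ if $x\ne x_t$. A piecewise stationary source (PWS) for length $T$ is given by a partition $\mathcal P=\{[t_1,t_2),[t_2,t_3),\dots,[t_n,t_{n+1})\}$ of $\{1,\dots,T\}$ into integer intervals ($[i,j)=\{i,\dots,j-1\}$, $1=t_1<\dots<t_{n+1}=T+1$) and distributions $\{p_S\}_{S\in\mathcal P}$ on $\mathcal X$; it predicts $p_S$ at time $t$ where $S$ is the segment containing $t$, so $\ell_{\mathrm{PWS}}(x_{1:T})=\sum_{S\in\mathcal P}\sum_{t\in S}\log\frac1{p_S(x_t)}$. The transition set $\mathcal T$ of $\mathcal P$ consists of the triples $(t,A,B)$ with $A=[i,t)\in\mathcal P$ and $B=[t,j)\in\mathcal P$ consecutive segments.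 The complexity is $C_{\mathrm{PWS}}=1+\sum_{(t,A,B)\in\mathcal T}\lVert p_B-p_A\rVert$, where $\lVert p-q\rVert=\sum_x|p(x)-q(x)|$. For distributions $q,r$ with $r$ fully supported, $D(q\parallel r)=\sum_{x:\,q(x)>0}q(x)\log\frac{q(x)}{r(x)}$. *)

theory Defs
  imports "HOL-Analysis.Analysis" "HOL-Library.Extended_Real"
begin

text \<open>Alphabet is {1..N}; sequences are functions nat => nat, x t for t in {1..T}.\<close>

definition lnq :: "real \<Rightarrow> real \<Rightarrow> ereal" where
  "lnq a b = (if b = 0 then \<infinity> else ereal (ln (a / b)))"

definition is_dist :: "nat \<Rightarrow> (nat \<Rightarrow> real) \<Rightarrow> bool" where
  "is_dist N q \<longleftrightarrow> (\<forall>y\<in>{1..N}. q y \<ge> 0) \<and> sum q {1..N} = 1"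

text \<open>Probability Smoothing: PS al eps N p x t y = PS(y; x_{1:t}).\<close>
fun PS :: "real \<Rightarrow> real \<Rightarrow> nat \<Rightarrow> (nat \<Rightarrow> real) \<Rightarrow> (nat \<Rightarrow> nat) \<Rightarrow> nat \<Rightarrow> nat \<Rightarrow> real" where
  "PS al eps N p x 0 y = p y"
| "PS al eps N p x (Suc t) y = al * PS al eps N p x t y +
     (1 - al) * (if y = x (Suc t) then 1 - eps else eps / (real N - 1))"

definition code_len_PS :: "real \<Rightarrow> real \<Rightarrow> nat \<Rightarrow> (nat \<Rightarrow> real) \<Rightarrow> (nat \<Rightarrow> nat) \<Rightarrow> nat \<Rightarrow> ereal" where
  "code_len_PS al eps N p x T = (\<Sum>t\<in>{1..T}. lnq 1 (PS al eps N p x (t - 1) (x t)))"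

text \<open>Piecewise stationary source with n segments [tb i, tb (i+1)), i = 1..n,
  and distribution ps i on segment i.\<close>
definition is_PWS :: "nat \<Rightarrow> nat \<Rightarrow> nat \<Rightarrow> (nat \<Rightarrow> nat) \<Rightarrow> (nat \<Rightarrow> nat \<Rightarrow> real) \<Rightarrow> bool" where
  "is_PWS N T n tb ps \<longleftrightarrow> n \<ge> 1 \<and> tb 1 = 1 \<and> tb (n + 1) = T + 1 \<and>
     (\<forall>i\<in>{1..n}. tb i < tb (i + 1)) \<and> (\<forall>i\<in>{1..n}. is_dist N (ps i))"

definition code_len_PWS :: "nat \<Rightarrow> (nat \<Rightarrow> nat) \<Rightarrow> (nat \<Rightarrow> nat \<Rightarrow> real) \<Rightarrow> (nat \<Rightarrow> nat) \<Rightarrow> ereal" where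
  "code_len_PWS n tb ps x = (\<Sum>i\<in>{1..n}. \<Sum>s\<in>{tb i..<tb (i + 1)}. lnq 1 (ps i (x s)))"

definition complexity_PWS :: "nat \<Rightarrow> nat \<Rightarrow> (nat \<Rightarrow> nat \<Rightarrow> real) \<Rightarrow> real" where
  "complexity_PWS N n ps = 1 + (\<Sum>i\<in>{1..<n}. \<Sum>y\<in>{1..N}. \<bar>ps (i + 1) y - ps i y\<bar>)"

definition KL_unif :: "nat \<Rightarrow> (nat \<Rightarrow> real) \<Rightarrow> ereal" where
  "KL_unif N p = (\<Sum>y\<in>{1..N}. ereal (1 / real N) * lnq (1 / real N) (p y))"

end

theory Submission
  imports Defs
begin
lemma key:
  fixes a e w r L w' :: real
  assumes a0: "0 < a" and a1: "a < 1" and e0: "0 \<le> e" and e1: "e < 1"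
    and w0: "0 < w" and w1: "w \<le> 1" and r0: "0 < r" and r1: "r \<le> 1"
    and w'd: "w' = a * w + (1 - a) * (1 - e)" and Ld: "L = ln (1 / a)"
  shows "ln r - ln w' + (1 - r) - (r / L) * (ln w' - ln w) \<le> ln (1 / (1 - e)) + ln (1 / (1 - e)) / L"
proof -
  have L0: "L > 0" using Ld a0 a1 by simp
  have le0: "ln (1 / (1 - e)) \<ge> 0" using e0 e1 by simp
  have lem: "ln (1/(1-e)) = - ln (1-e)" using e1 by (simp add: ln_div)
  have w'pos: "w' > 0" using w'd a0 a1 e1 w0 by (smt (verit) mult_pos_pos)
  show ?thesis
  proof (cases "w \<le> 1 - e")
    case True
    define B where "B = (ln w' - ln w) / L"
    have ww': "w' - w = (1 - a) * (1 - e - w)" using w'd by (simp add: algebra_simps)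
    have ww'0: "w' \<ge> w" using ww' a1 True by (smt (verit) mult_nonneg_nonneg)
    have lnr: "ln w' - ln w \<ge> 1 - w / w'"
    proof -
      have "ln (w / w') \<le> w / w' - 1" using w0 w'pos by (intro ln_le_minus_one) simp
      thus ?thesis using w0 w'pos by (simp add: ln_div)
    qed
    have B0: "B \<ge> 0" unfolding B_def using L0 ww'0 w0 by (simp add: divide_nonneg_pos)
    have Lb: "L \<le> (1 - a) / a"
    proof -
      have "ln (1/a) \<le> 1/a - 1" using a0 by (intro ln_le_minus_one) simp
      thus ?thesis using Ld a0 by (simp add: field_simps)
    qed
    have "w' * (ln w' - ln w) \<ge> w' - w"
    proof -
      have "w' * (1 - w / w') \<le> w' * (ln w' - ln w)" using lnr w'pos by (intro mult_left_mono) auto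
      moreover have "w' * (1 - w / w') = w' - w" using w'pos by (simp add: field_simps)
      ultimately show ?thesis by simp
    qed
    hence "w' * (ln w' - ln w) \<ge> (1 - a) * (1 - e - w)" using ww' by simp
    moreover have "(1 - a) * (1 - e - w) / L \<ge> a * (1 - e - w)"
    proof -
      have nn: "(1 - a) * (1 - e - w) \<ge> 0" using a1 True by simp
      have "a * (1 - e - w) = (1 - e - w) * (1 - a) / ((1 - a) / a)" using a0 a1 by (simp add: field_simps)
      also have "\<dots> \<le> (1 - e - w) * (1 - a) / L"
        using nn L0 Lb a0 a1 by (intro divide_left_mono) (auto simp: mult.commute)
      finally show ?thesis by (simp add: mult.commute)
    qed
    ultimately have "w' * B \<ge> a * (1 - e - w)" unfolding B_def using L0
      by (smt (verit, ccfv_SIG) divide_right_mono times_divide_eq_right)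
    hence wB: "w' * (1 + B) \<ge> 1 - e"
    proof -
      assume h: "w' * B \<ge> a * (1 - e - w)"
      have "w' * (1 + B) = w' + w' * B" by (simp add: algebra_simps)
      moreover have "w' + a * (1 - e - w) = 1 - e" using w'd by (simp add: algebra_simps)
      ultimately show ?thesis using h by linarith
    qed
    have "ln (r * (1 + B)) \<le> r * (1 + B) - 1" using r0 B0 by (intro ln_le_minus_one) simp
    moreover have "ln (r * (1 + B)) = ln r + ln (1 + B)" using r0 B0 by (simp add: ln_mult)
    ultimately have h1: "ln r + 1 - r - r * B \<le> - ln (1 + B)" by (simp add: algebra_simps)
    have "ln (1 - e) \<le> ln (w' * (1 + B))" using wB e1 by simp
    hence "ln (1 - e) \<le> ln w' + ln (1 + B)" using w'pos B0 by (simp add: ln_mult)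
    hence "ln r - ln w' + (1 - r) - r * B \<le> ln (1 / (1 - e))" using h1 lem by linarith
    moreover have "(r / L) * (ln w' - ln w) = r * B" unfolding B_def by simp
    moreover have "ln (1 / (1 - e)) / L \<ge> 0" using le0 L0 by simp
    ultimately show ?thesis by linarith
  next
    case False
    have "ln r \<le> r - 1" using r0 by (rule ln_le_minus_one)
    have w'e: "w' \<ge> 1 - e"
    proof -
      have "w' - (1 - e) = a * (w - (1 - e))" using w'd by (simp add: algebra_simps)
      moreover have "a * (w - (1 - e)) \<ge> 0" using False a0 by simp
      ultimately show ?thesis by simp
    qed
    hence h2: "- ln w' \<le> ln (1 / (1 - e))" using lem e1 by simp
    have "ln w \<le> 0" using w0 w1 by simp
    moreover have "ln (1 - e) \<le> ln w'" using w'e e1 by simp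
    ultimately have "ln w' - ln w \<ge> - ln (1 / (1 - e))" using lem by linarith
    hence "(r / L) * (ln w' - ln w) \<ge> (r / L) * (- ln (1 / (1 - e)))"
      using r0 L0 by (intro mult_left_mono) auto
    moreover have "(r / L) * ln (1 / (1 - e)) \<le> ln (1 / (1 - e)) / L"
    proof -
      have "r * ln (1 / (1 - e)) \<le> ln (1 / (1 - e))" using r1 r0 le0 by (simp add: mult_left_le_one_le)
      thus ?thesis using L0 by (simp add: divide_right_mono)
    qed
    ultimately show ?thesis using h2 \<open>ln r \<le> r - 1\<close> by simp
  qed
qed

locale PSsetup =
  fixes N T :: nat and al eps :: real and p :: "nat \<Rightarrow> real" and x :: "nat \<Rightarrow> nat"
  assumes N2: "N \<ge> 2" and al0: "0 < al" and al1: "al < 1" and eps0: "0 < eps"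
    and eps1: "eps \<le> 1 - 1 / real N"
    and pd: "is_dist N p" and plow: "\<forall>y\<in>{1..N}. p y \<ge> eps / (real N - 1)"
    and xr: "\<forall>t\<in>{1..T}. x t \<in> {1..N}"
begin

abbreviation z where "z t y \<equiv> PS al eps N p x t y"
definition L where "L = ln (1 / al)"
definition le where "le = ln (1 / (1 - eps))"
definition Phi where "Phi r t = (\<Sum>y\<in>{1..N}. r y * - ln (z t y))"
definition Psi where "Psi t = (\<Sum>y\<in>{1..N}. - ln (z t y))"
definition K0 where "K0 = (real N - 1) * L + le + le / L"

lemma N1: "real N - 1 > 0" using N2 by simp

lemma epsN: "eps / (real N - 1) \<le> 1 - eps"
proof -
  have "eps * real N \<le> real N - 1" using eps1 N2 by (simp add: field_simps)
  hence "eps \<le> (1 - eps) * (real N - 1)" by (simp add: algebra_simps)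
  thus ?thesis using N1 by (simp add: divide_le_eq mult.commute)
qed

lemma eps_lt1: "eps < 1"
proof -
  have "1 / real N > 0" using N2 by simp
  thus ?thesis using eps1 by linarith
qed

lemma L0: "L > 0" unfolding L_def using al0 al1 by simp
lemma le0: "le \<ge> 0" unfolding le_def using eps0 eps_lt1 by simp

lemma z_low: "y \<in> {1..N} \<Longrightarrow> eps / (real N - 1) \<le> z t y"
proof (induction t)
  case 0
  then show ?case using plow by simp
next
  case (Suc t)
  let ?c = "eps / (real N - 1)"
  have q: "?c \<le> (if y = x (Suc t) then 1 - eps else ?c)" using epsN by simp
  have "al * ?c + (1 - al) * ?c \<le> al * z t y + (1 - al) * (if y = x (Suc t) then 1 - eps else ?c)"
    using Suc al0 al1 q by (intro add_mono mult_left_mono) auto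
  moreover have "?c = al * ?c + (1 - al) * ?c" by (metis distrib_right add_diff_cancel_left' mult_1 add.commute diff_add_cancel)
  moreover have "z (Suc t) y = al * z t y + (1 - al) * (if y = x (Suc t) then 1 - eps else ?c)" by simp
  ultimately show ?case by linarith
qed

lemma z_pos: "y \<in> {1..N} \<Longrightarrow> 0 < z t y"
proof -
  assume "y \<in> {1..N}"
  hence "eps / (real N - 1) \<le> z t y" by (rule z_low)
  moreover have "eps / (real N - 1) > 0" using eps0 N1 by simp
  ultimately show ?thesis by linarith
qed

lemma sum_q:
  assumes "xt \<in> {1..N}"
  shows "(\<Sum>y\<in>{1..N}. (if y = xt then 1 - eps else eps / (real N - 1))) = 1"
proof -
  have "(\<Sum>y\<in>{1..N}. (if y = xt then 1 - eps else eps / (real N - 1)))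
     = (1 - eps) + (\<Sum>y\<in>{1..N} - {xt}. (if y = xt then 1 - eps else eps / (real N - 1)))"
    using assms by (simp add: sum.remove)
  also have "(\<Sum>y\<in>{1..N} - {xt}. (if y = xt then 1 - eps else eps / (real N - 1)))
      = (\<Sum>y\<in>{1..N} - {xt}. eps / (real N - 1))" by (intro sum.cong) auto
  also have "\<dots> = real (N - 1) * (eps / (real N - 1))" using assms by simp
  also have "\<dots> = eps" using N1 N2 by (simp add: of_nat_diff)
  finally show ?thesis by simp
qed

lemma z_sum: "t \<le> T \<Longrightarrow> (\<Sum>y\<in>{1..N}. z t y) = 1"
proof (induction t)
  case 0
  then show ?case using pd unfolding is_dist_def by simp
next
  case (Suc t)
  have xt: "x (Suc t) \<in> {1..N}" using xr Suc.prems by simp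
  have "(\<Sum>y\<in>{1..N}. z (Suc t) y) = al * (\<Sum>y\<in>{1..N}. z t y)
     + (1 - al) * (\<Sum>y\<in>{1..N}. (if y = x (Suc t) then 1 - eps else eps / (real N - 1)))"
    by (simp add: sum.distrib sum_distrib_left)
  also have "\<dots> = 1" using Suc sum_q[OF xt] by simp
  finally show ?case .
qed

lemma z_le1: "t \<le> T \<Longrightarrow> y \<in> {1..N} \<Longrightarrow> z t y \<le> 1"
proof -
  assume t: "t \<le> T" and y: "y \<in> {1..N}"
  have "z t y \<le> (\<Sum>y\<in>{1..N}. z t y)"
    using y z_pos by (intro member_le_sum) (auto intro: less_imp_le)
  thus ?thesis using z_sum[OF t] by simp
qed

lemma dist_le1: "is_dist N r \<Longrightarrow> y \<in> {1..N} \<Longrightarrow> r y \<le> 1"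
proof -
  assume d: "is_dist N r" and y: "y \<in> {1..N}"
  have "r y \<le> (\<Sum>y\<in>{1..N}. r y)" using d y unfolding is_dist_def by (intro member_le_sum) auto
  thus ?thesis using d unfolding is_dist_def by simp
qed

lemma step1:
  assumes t: "t < T" and rd: "is_dist N r" and rp: "0 < r (x (Suc t))"
  shows "- ln (z t (x (Suc t))) \<le> - ln (r (x (Suc t))) + (Phi r t - Phi r (Suc t)) / L
          + (Psi t - Psi (Suc t)) + K0"
proof -
  define xt where "xt = x (Suc t)"
  have xt: "xt \<in> {1..N}" using xr t unfolding xt_def by simp
  define w where "w = z t xt"
  define w' where "w' = z (Suc t) xt"
  define d where "d y = ln (z (Suc t) y) - ln (z t y)" for y
  have w'd: "w' = al * w + (1 - al) * (1 - eps)" unfolding w'_def w_def xt_def by simp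
  have w0: "0 < w" unfolding w_def using z_pos xt by simp
  have w1: "w \<le> 1" unfolding w_def using z_le1 xt t by simp
  have r1: "r xt \<le> 1" using dist_le1 rd xt by simp
  have rx: "0 < r xt" using rp unfolding xt_def .
  have dlow: "d y \<ge> - L" if y: "y \<in> {1..N} - {xt}" for y
  proof -
    have yN: "y \<in> {1..N}" using y by simp
    have "z (Suc t) y = al * z t y + (1 - al) * (eps / (real N - 1))" using y unfolding xt_def by simp
    moreover have "(1 - al) * (eps / (real N - 1)) \<ge> 0" using al1 eps0 N1 by simp
    ultimately have "z (Suc t) y \<ge> al * z t y" by linarith
    hence "ln (z (Suc t) y) \<ge> ln (al * z t y)" using z_pos[OF yN, of t] al0 by (intro ln_mono) auto
    also have "ln (al * z t y) = ln al + ln (z t y)" using z_pos[OF yN, of t] al0 by (simp add: ln_mult_pos)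
    finally show ?thesis unfolding d_def L_def using al0 by (simp add: ln_div)
  qed
  have PhiD: "Phi r t - Phi r (Suc t) = (\<Sum>y\<in>{1..N}. r y * d y)"
    unfolding Phi_def d_def by (simp add: sum_subtractf[symmetric] algebra_simps)
  also have "\<dots> = r xt * d xt + (\<Sum>y\<in>{1..N} - {xt}. r y * d y)" using xt by (simp add: sum.remove)
  also have "(\<Sum>y\<in>{1..N} - {xt}. r y * d y) \<ge> (\<Sum>y\<in>{1..N} - {xt}. r y * (- L))"
    using dlow rd unfolding is_dist_def by (intro sum_mono mult_left_mono) auto
  hence "r xt * d xt + (\<Sum>y\<in>{1..N} - {xt}. r y * d y) \<ge> r xt * d xt + (\<Sum>y\<in>{1..N} - {xt}. r y * (- L))"
    by simp
  moreover have "(\<Sum>y\<in>{1..N} - {xt}. r y * (- L)) = - L * (1 - r xt)"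
  proof -
    have "(\<Sum>y\<in>{1..N} - {xt}. r y) = 1 - r xt"
      using rd xt unfolding is_dist_def by (simp add: sum.remove)
    moreover have "(\<Sum>y\<in>{1..N} - {xt}. r y * (- L)) = (\<Sum>y\<in>{1..N} - {xt}. r y) * (- L)"
      by (rule sum_distrib_right[symmetric])
    ultimately show ?thesis by simp
  qed
  ultimately have Phi1: "Phi r t - Phi r (Suc t) \<ge> r xt * d xt - L * (1 - r xt)"
    using PhiD by simp
  have Psi1: "Psi t - Psi (Suc t) \<ge> d xt - L * (real N - 1)"
  proof -
    have "Psi t - Psi (Suc t) = (\<Sum>y\<in>{1..N}. d y)"
      unfolding Psi_def d_def by (simp add: sum_subtractf[symmetric] algebra_simps)
    also have "\<dots> = d xt + (\<Sum>y\<in>{1..N} - {xt}. d y)" using xt by (simp add: sum.remove)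
    also have "(\<Sum>y\<in>{1..N} - {xt}. d y) \<ge> (\<Sum>y\<in>{1..N} - {xt}. - L)"
      using dlow by (intro sum_mono) auto
    moreover have "(\<Sum>y\<in>{1..N} - {xt}. - L) = - L * (real N - 1)"
      using xt N2 by (simp add: of_nat_diff)
    ultimately show ?thesis by linarith
  qed
  have Phi2: "(Phi r t - Phi r (Suc t)) / L \<ge> (r xt / L) * d xt - (1 - r xt)"
  proof -
    have "(r xt * d xt - L * (1 - r xt)) / L \<le> (Phi r t - Phi r (Suc t)) / L"
      using Phi1 L0 by (intro divide_right_mono) auto
    moreover have "(r xt * d xt - L * (1 - r xt)) / L = (r xt / L) * d xt - (1 - r xt)"
      using L0 by (simp add: field_simps)
    ultimately show ?thesis by simp
  qed
  have k: "ln (r xt) - ln w' + (1 - r xt) - (r xt / L) * (ln w' - ln w) \<le> le + le / L"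
    unfolding le_def
    by (rule key[OF al0 al1 less_imp_le[OF eps0] eps_lt1 w0 w1 rx r1 w'd L_def])
  have dxt: "d xt = ln w' - ln w" unfolding d_def w_def w'_def by simp
  have m1: "r xt / L * d xt = r xt / L * (ln w' - ln w)" using dxt by simp
  have m2: "L * (real N - 1) = (real N - 1) * L" by simp
  show ?thesis
    using k Phi2 Psi1 dxt m1 m2 unfolding K0_def xt_def[symmetric] w_def[symmetric] by linarith
qed

lemma seg:
  assumes ab: "1 \<le> a" "a \<le> b" and bT: "b \<le> T + 1" and rd: "is_dist N r"
    and rp: "\<forall>s\<in>{a..<b}. 0 < r (x s)"
  shows "(\<Sum>s\<in>{a..<b}. - ln (z (s - 1) (x s))) \<le> (\<Sum>s\<in>{a..<b}. - ln (r (x s))) + K0 * real (b - a)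
     + (Phi r (a - 1) - Phi r (b - 1)) / L + (Psi (a - 1) - Psi (b - 1))"
  using ab(2)
proof (induction b rule: dec_induct)
  case base
  then show ?case by simp
next
  case (step m)
  have m1: "1 \<le> m" using ab step by simp
  have mT: "m - 1 < T" using step bT m1 by simp
  have sm: "Suc (m - 1) = m" using m1 by simp
  have rpm: "0 < r (x m)" using rp step by simp
  have st: "- ln (z (m - 1) (x m)) \<le> - ln (r (x m)) + (Phi r (m - 1) - Phi r m) / L
          + (Psi (m - 1) - Psi m) + K0"
    using step1[OF mT rd] rpm sm by simp
  have e1: "(Phi r (a - 1) - Phi r (m - 1)) / L + (Phi r (m - 1) - Phi r m) / L = (Phi r (a - 1) - Phi r m) / L"
    by (simp add: diff_divide_distrib)
  have e2: "real (Suc m - a) = real (m - a) + 1" using step by (simp add: of_nat_diff)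
  show ?case using step.IH st e1 e2 step.hyps(1)
    by (simp add: sum.atLeastLessThan_Suc algebra_simps)
qed

lemma Psi_low: "t \<le> T \<Longrightarrow> Psi t \<ge> real N * ln (real N)"
proof -
  assume t: "t \<le> T"
  have N0: "real N > 0" using N2 by simp
  have "(\<Sum>y\<in>{1..N}. ln (real N * z t y)) \<le> (\<Sum>y\<in>{1..N}. real N * z t y - 1)"
    using z_pos N0 by (intro sum_mono ln_le_minus_one) auto
  also have "\<dots> = real N * (\<Sum>y\<in>{1..N}. z t y) - real N"
    by (simp add: sum_subtractf sum_distrib_left)
  also have "\<dots> = 0" using z_sum[OF t] by simp
  finally have h: "(\<Sum>y\<in>{1..N}. ln (real N * z t y)) \<le> 0" .
  have "(\<Sum>y\<in>{1..N}. ln (real N * z t y)) = (\<Sum>y\<in>{1..N}. ln (real N) + ln (z t y))"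
    using z_pos N0 by (intro sum.cong) (auto simp: ln_mult_pos)
  also have "\<dots> = real N * ln (real N) - Psi t" unfolding Psi_def by (simp add: sum.distrib sum_negf)
  finally show ?thesis using h by simp
qed

lemma nlz: "y \<in> {1..N} \<Longrightarrow> - ln (z t y) \<le> ln (real N / eps)"
proof -
  assume y: "y \<in> {1..N}"
  have "eps / real N \<le> eps / (real N - 1)" using eps0 N1 by (intro divide_left_mono) auto
  also have "\<dots> \<le> z t y" using z_low[OF y] .
  finally have "ln (eps / real N) \<le> ln (z t y)" using eps0 N2 by (intro ln_mono) auto
  moreover have "ln (eps / real N) = - ln (real N / eps)" using eps0 N2 by (simp add: ln_div)
  ultimately show ?thesis by simp
qed

lemma nlz0: "t \<le> T \<Longrightarrow> y \<in> {1..N} \<Longrightarrow> 0 \<le> - ln (z t y)"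
  using z_le1 z_pos by simp

lemma Phi_nonneg: "t \<le> T \<Longrightarrow> is_dist N r \<Longrightarrow> Phi r t \<ge> 0"
  unfolding Phi_def is_dist_def using nlz0 by (intro sum_nonneg mult_nonneg_nonneg) auto

lemma Phi_switch: "t \<le> T \<Longrightarrow> Phi r2 t - Phi r1 t \<le> (\<Sum>y\<in>{1..N}. \<bar>r2 y - r1 y\<bar>) * ln (real N / eps)"
proof -
  assume t: "t \<le> T"
  have "Phi r2 t - Phi r1 t = (\<Sum>y\<in>{1..N}. (r2 y - r1 y) * - ln (z t y))"
    unfolding Phi_def by (simp add: sum_subtractf[symmetric] algebra_simps)
  also have "\<dots> \<le> (\<Sum>y\<in>{1..N}. \<bar>r2 y - r1 y\<bar> * ln (real N / eps))"
  proof (intro sum_mono)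
    fix y assume y: "y \<in> {1..N}"
    have "(r2 y - r1 y) * - ln (z t y) \<le> \<bar>r2 y - r1 y\<bar> * - ln (z t y)"
      using nlz0[OF t y] by (intro mult_right_mono) auto
    also have "\<dots> \<le> \<bar>r2 y - r1 y\<bar> * ln (real N / eps)"
      using nlz[OF y] by (intro mult_left_mono) auto
    finally show "(r2 y - r1 y) * - ln (z t y) \<le> \<bar>r2 y - r1 y\<bar> * ln (real N / eps)" .
  qed
  also have "\<dots> = (\<Sum>y\<in>{1..N}. \<bar>r2 y - r1 y\<bar>) * ln (real N / eps)" by (simp add: sum_distrib_right)
  finally show ?thesis .
qed

lemma Phi0: "is_dist N r \<Longrightarrow> Phi r 0 \<le> ln (real N / eps)"
proof -
  assume rd: "is_dist N r"
  have "Phi r 0 \<le> (\<Sum>y\<in>{1..N}. r y * ln (real N / eps))"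
    unfolding Phi_def using rd nlz[of _ 0] unfolding is_dist_def by (intro sum_mono mult_left_mono) auto
  also have "\<dots> = ln (real N / eps)" using rd unfolding is_dist_def by (simp add: sum_distrib_right[symmetric])
  finally show ?thesis .
qed

end

lemma tb_mono:
  assumes pw: "is_PWS N T n tb ps" and i: "1 \<le> i" and ij: "i \<le> j" and j: "j \<le> n + 1"
  shows "tb i \<le> tb j"
  using ij j
proof (induction j rule: dec_induct)
  case base then show ?case by simp
next
  case (step m)
  have "m \<in> {1..n}" using step i by simp
  hence "tb m < tb (m + 1)" using pw unfolding is_PWS_def by blast
  thus ?case using step by simp
qed

context PSsetup begin

lemma main:
  assumes pw: "is_PWS N T n tb ps"
    and pos: "\<forall>i\<in>{1..n}. \<forall>s\<in>{tb i..<tb (i + 1)}. 0 < ps i (x s)"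
  shows "(\<Sum>s\<in>{1..T}. - ln (z (s - 1) (x s)))
     \<le> (\<Sum>i\<in>{1..n}. \<Sum>s\<in>{tb i..<tb (i + 1)}. - ln (ps i (x s))) + K0 * real T
       + ln (real N / eps) * complexity_PWS N n ps / L + (Psi 0 - real N * ln (real N))"
proof -
  define D where "D i = (\<Sum>y\<in>{1..N}. \<bar>ps (i + 1) y - ps i y\<bar>)" for i
  define c where "c = ln (real N / eps)"
  have n1: "n \<ge> 1" and tb1: "tb 1 = 1" and tbn: "tb (n + 1) = T + 1"
    and dps: "\<And>i. i \<in> {1..n} \<Longrightarrow> is_dist N (ps i)"
    using pw unfolding is_PWS_def by auto
  have tbge: "1 \<le> tb i" if "1 \<le> i" "i \<le> n + 1" for i
    using tb_mono[OF pw order_refl[of 1], of i] that tb1 by simp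
  have tble: "tb i \<le> T + 1" if "1 \<le> i" "i \<le> n + 1" for i
    using tb_mono[OF pw that(1) that(2) order_refl] tbn by simp
  have Q: "m \<le> n \<Longrightarrow> (\<Sum>s\<in>{1..<tb (Suc m)}. - ln (z (s - 1) (x s)))
     \<le> (\<Sum>i\<in>{1..m}. \<Sum>s\<in>{tb i..<tb (i + 1)}. - ln (ps i (x s))) + K0 * real (tb (Suc m) - 1)
       + (c * (1 + (\<Sum>i\<in>{1..<m}. D i)) - Phi (ps m) (tb (Suc m) - 1)) / L
       + (Psi 0 - Psi (tb (Suc m) - 1))" if m1: "1 \<le> m" for m
    using m1
  proof (induction m rule: dec_induct)
    case base
    have b1: "1 \<le> tb 2" "tb 2 \<le> T + 1" using tbge[of 2] tble[of 2] n1 by auto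
    have s: "(\<Sum>s\<in>{1..<tb 2}. - ln (z (s - 1) (x s))) \<le> (\<Sum>s\<in>{1..<tb 2}. - ln (ps 1 (x s))) + K0 * real (tb 2 - 1)
     + (Phi (ps 1) (1 - 1) - Phi (ps 1) (tb 2 - 1)) / L + (Psi (1 - 1) - Psi (tb 2 - 1))"
    proof -
      have "\<forall>s\<in>{tb 1..<tb (1 + 1)}. 0 < ps 1 (x s)" using pos n1 by simp
      hence "\<forall>s\<in>{1..<tb 2}. 0 < ps 1 (x s)" using tb1 by (simp add: numeral_2_eq_2)
      thus ?thesis using seg[OF order_refl b1 dps[of 1]] n1 by simp
    qed
    have "(Phi (ps 1) 0 - Phi (ps 1) (tb 2 - 1)) / L \<le> (c - Phi (ps 1) (tb 2 - 1)) / L"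
      using Phi0[OF dps[of 1]] n1 L0 unfolding c_def by (intro divide_right_mono) auto
    thus ?case using s tb1 by (simp add: numeral_2_eq_2)
  next
    case (step k)
    have kn: "k \<le> n" "Suc k \<le> n" using step by auto
    define a where "a = tb (Suc k)"
    define b where "b = tb (Suc (Suc k))"
    have ab: "1 \<le> a" "a \<le> b" "b \<le> T + 1"
      using tbge[of "Suc k"] tble[of "Suc (Suc k)"] tb_mono[OF pw _ _ _, of "Suc k" "Suc (Suc k)"] kn
      unfolding a_def b_def by auto
    have IH: "(\<Sum>s\<in>{1..<a}. - ln (z (s - 1) (x s)))
     \<le> (\<Sum>i\<in>{1..k}. \<Sum>s\<in>{tb i..<tb (i + 1)}. - ln (ps i (x s))) + K0 * real (a - 1)
       + (c * (1 + (\<Sum>i\<in>{1..<k}. D i)) - Phi (ps k) (a - 1)) / L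
       + (Psi 0 - Psi (a - 1))" using step.IH kn unfolding a_def by simp
    have S: "(\<Sum>s\<in>{a..<b}. - ln (z (s - 1) (x s))) \<le> (\<Sum>s\<in>{a..<b}. - ln (ps (Suc k) (x s))) + K0 * real (b - a)
     + (Phi (ps (Suc k)) (a - 1) - Phi (ps (Suc k)) (b - 1)) / L + (Psi (a - 1) - Psi (b - 1))"
      using seg[OF ab dps[of "Suc k"]] pos kn step.hyps(1) unfolding a_def b_def by simp
    have sw: "Phi (ps (Suc k)) (a - 1) - Phi (ps k) (a - 1) \<le> D k * c"
      using Phi_switch[of "a - 1" "ps (Suc k)" "ps k"] ab unfolding D_def c_def by simp
    have e1: "(\<Sum>s\<in>{1..<b}. - ln (z (s - 1) (x s))) = (\<Sum>s\<in>{1..<a}. - ln (z (s - 1) (x s))) + (\<Sum>s\<in>{a..<b}. - ln (z (s - 1) (x s)))"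
      using ab by (simp add: sum.atLeastLessThan_concat)
    have e2: "(\<Sum>i\<in>{1..Suc k}. \<Sum>s\<in>{tb i..<tb (i + 1)}. - ln (ps i (x s)))
       = (\<Sum>i\<in>{1..k}. \<Sum>s\<in>{tb i..<tb (i + 1)}. - ln (ps i (x s))) + (\<Sum>s\<in>{a..<b}. - ln (ps (Suc k) (x s)))"
      unfolding a_def b_def by simp
    have e3: "(\<Sum>i\<in>{1..<Suc k}. D i) = (\<Sum>i\<in>{1..<k}. D i) + D k"
      using step.hyps(1) by (simp add: sum.atLeastLessThan_Suc)
    have e4: "real (b - 1) = real (a - 1) + real (b - a)" using ab by (simp add: of_nat_diff)
    have e5: "(c * (1 + (\<Sum>i\<in>{1..<k}. D i)) - Phi (ps k) (a - 1)) / L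
       + (Phi (ps (Suc k)) (a - 1) - Phi (ps (Suc k)) (b - 1)) / L
       \<le> (c * (1 + (\<Sum>i\<in>{1..<Suc k}. D i)) - Phi (ps (Suc k)) (b - 1)) / L"
    proof -
      have "(c * (1 + (\<Sum>i\<in>{1..<k}. D i)) - Phi (ps k) (a - 1))
       + (Phi (ps (Suc k)) (a - 1) - Phi (ps (Suc k)) (b - 1))
       \<le> (c * (1 + (\<Sum>i\<in>{1..<Suc k}. D i)) - Phi (ps (Suc k)) (b - 1))"
        using sw e3 by (simp add: algebra_simps)
      hence "((c * (1 + (\<Sum>i\<in>{1..<k}. D i)) - Phi (ps k) (a - 1))
       + (Phi (ps (Suc k)) (a - 1) - Phi (ps (Suc k)) (b - 1))) / L
       \<le> (c * (1 + (\<Sum>i\<in>{1..<Suc k}. D i)) - Phi (ps (Suc k)) (b - 1)) / L"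
        using L0 by (intro divide_right_mono) auto
      thus ?thesis by (simp add: add_divide_distrib)
    qed
    have fin: "(\<Sum>s\<in>{1..<b}. - ln (z (s - 1) (x s)))
     \<le> (\<Sum>i\<in>{1..Suc k}. \<Sum>s\<in>{tb i..<tb (i + 1)}. - ln (ps i (x s))) + K0 * real (b - 1)
       + (c * (1 + (\<Sum>i\<in>{1..<Suc k}. D i)) - Phi (ps (Suc k)) (b - 1)) / L
       + (Psi 0 - Psi (b - 1))"
      using IH S e1 e2 e4 e5 by (simp add: algebra_simps)
    show ?case using fin unfolding b_def by simp
  qed
  have Qn: "(\<Sum>s\<in>{1..<T + 1}. - ln (z (s - 1) (x s)))
     \<le> (\<Sum>i\<in>{1..n}. \<Sum>s\<in>{tb i..<tb (i + 1)}. - ln (ps i (x s))) + K0 * real T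
       + (c * (1 + (\<Sum>i\<in>{1..<n}. D i)) - Phi (ps n) T) / L
       + (Psi 0 - Psi T)"
    using Q[OF n1 order_refl] tbn by simp
  have "(c * (1 + (\<Sum>i\<in>{1..<n}. D i)) - Phi (ps n) T) / L \<le> c * (1 + (\<Sum>i\<in>{1..<n}. D i)) / L"
    using Phi_nonneg[OF order_refl dps[of n]] n1 L0 by (intro divide_right_mono) auto
  moreover have "c * (1 + (\<Sum>i\<in>{1..<n}. D i)) = ln (real N / eps) * complexity_PWS N n ps"
    unfolding c_def D_def complexity_PWS_def by simp
  moreover have "{1..<T + 1} = {1..T}" by auto
  ultimately show ?thesis using Qn Psi_low[OF order_refl] by simp
qed

end

lemma lnq_pos: "b > 0 \<Longrightarrow> lnq a b = ereal (ln (a / b))" unfolding lnq_def by simp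

theorem theorem1:
  fixes N T n :: nat and tb :: "nat \<Rightarrow> nat" and ps :: "nat \<Rightarrow> nat \<Rightarrow> real"
    and al eps :: real and p :: "nat \<Rightarrow> real" and x :: "nat \<Rightarrow> nat"
  assumes "N \<ge> 2" and "T \<ge> 1"
    and "is_PWS N T n tb ps"
    and "0 < al" and "al < 1"
    and "0 \<le> eps" and "eps \<le> 1 - 1 / real N"
    and "is_dist N p" and "\<forall>y\<in>{1..N}. p y \<ge> eps / (real N - 1)"
    and "\<forall>t\<in>{1..T}. x t \<in> {1..N}"
  shows "code_len_PS al eps N p x T \<le>
     code_len_PWS n tb ps x
     + ereal ((ln (1 / (1 - eps)) / ln (1 / al) + real N * ln (1 / al)
              + (real N + 1) * ln (1 / (1 - eps))) * real T)
     + lnq (real N) eps * ereal (complexity_PWS N n ps / ln (1 / al))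
     + ereal (real N) * KL_unif N p"
proof -
  note A = assms
  have Lp: "ln (1 / al) > 0" using A(4,5) by simp
  have C1: "complexity_PWS N n ps \<ge> 1" unfolding complexity_PWS_def
    by (simp add: sum_nonneg)
  have Cp: "complexity_PWS N n ps / ln (1 / al) > 0" using C1 Lp by simp
  have pw: "n \<ge> 1" "tb 1 = 1" "tb (n + 1) = T + 1" "\<And>i. i \<in> {1..n} \<Longrightarrow> is_dist N (ps i)"
    using A(3) unfolding is_PWS_def by auto
  show ?thesis
  proof (cases "eps = 0")
    case True
    hence h: "lnq (real N) eps * ereal (complexity_PWS N n ps / ln (1 / al)) = \<infinity>"
      using Cp C1 Lp unfolding lnq_def by simp
    show ?thesis unfolding h by simp
  next
    case False
    hence eps0: "0 < eps" using A(6) by simp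
    show ?thesis
    proof (cases "\<forall>i\<in>{1..n}. \<forall>s\<in>{tb i..<tb (i + 1)}. 0 < ps i (x s)")
      case False
      then obtain i s where i: "i \<in> {1..n}" and s: "s \<in> {tb i..<tb (i + 1)}" and np: "\<not> 0 < ps i (x s)"
        by blast
      have "1 \<le> tb i" using tb_mono[OF A(3), of 1 i] i pw(2) by simp
      moreover have "tb (i + 1) \<le> T + 1" using tb_mono[OF A(3), of "i + 1" "n + 1"] i pw(3) by simp
      ultimately have "s \<in> {1..T}" using s by auto
      hence "x s \<in> {1..N}" using A(10) by simp
      hence "ps i (x s) \<ge> 0" using pw(4)[OF i] unfolding is_dist_def by simp
      hence "ps i (x s) = 0" using np by simp
      hence "lnq 1 (ps i (x s)) = \<infinity>" unfolding lnq_def by simp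
      hence "(\<Sum>s\<in>{tb i..<tb (i + 1)}. lnq 1 (ps i (x s))) = \<infinity>" using s by (auto simp: sum_Pinfty)
      hence "code_len_PWS n tb ps x = \<infinity>" unfolding code_len_PWS_def using i by (auto simp: sum_Pinfty)
      thus ?thesis by simp
    next
      case True
      interpret P: PSsetup N T al eps p x
        using A eps0 by unfold_locales auto
      have M: "(\<Sum>s\<in>{1..T}. - ln (PS al eps N p x (s - 1) (x s)))
         \<le> (\<Sum>i\<in>{1..n}. \<Sum>s\<in>{tb i..<tb (i + 1)}. - ln (ps i (x s))) + P.K0 * real T
           + ln (real N / eps) * complexity_PWS N n ps / P.L + (P.Psi 0 - real N * ln (real N))"
        by (rule P.main[OF A(3) True])
      have e1: "code_len_PS al eps N p x T = ereal (\<Sum>s\<in>{1..T}. - ln (PS al eps N p x (s - 1) (x s)))"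
      proof -
        have "code_len_PS al eps N p x T = (\<Sum>s\<in>{1..T}. ereal (- ln (PS al eps N p x (s - 1) (x s))))"
          unfolding code_len_PS_def
        proof (intro sum.cong refl)
          fix s assume "s \<in> {1..T}"
          hence "x s \<in> {1..N}" using A(10) by simp
          hence "PS al eps N p x (s - 1) (x s) > 0" by (rule P.z_pos)
          thus "lnq 1 (PS al eps N p x (s - 1) (x s)) = ereal (- ln (PS al eps N p x (s - 1) (x s)))"
            by (simp add: lnq_pos ln_div)
        qed
        thus ?thesis by simp
      qed
      have e2: "code_len_PWS n tb ps x = ereal (\<Sum>i\<in>{1..n}. \<Sum>s\<in>{tb i..<tb (i + 1)}. - ln (ps i (x s)))"
      proof -
        have "code_len_PWS n tb ps x = (\<Sum>i\<in>{1..n}. ereal (\<Sum>s\<in>{tb i..<tb (i + 1)}. - ln (ps i (x s))))"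
          unfolding code_len_PWS_def
        proof (intro sum.cong refl)
          fix i assume i: "i \<in> {1..n}"
          have "(\<Sum>s\<in>{tb i..<tb (i + 1)}. lnq 1 (ps i (x s))) = (\<Sum>s\<in>{tb i..<tb (i + 1)}. ereal (- ln (ps i (x s))))"
          proof (intro sum.cong refl)
            fix s assume "s \<in> {tb i..<tb (i + 1)}"
            hence "ps i (x s) > 0" using True i by blast
            thus "lnq 1 (ps i (x s)) = ereal (- ln (ps i (x s)))" by (simp add: lnq_pos ln_div)
          qed
          thus "(\<Sum>s\<in>{tb i..<tb (i + 1)}. lnq 1 (ps i (x s))) = ereal (\<Sum>s\<in>{tb i..<tb (i + 1)}. - ln (ps i (x s)))"
            by simp
        qed
        thus ?thesis by simp
      qed
      have pp: "p y > 0" if "y \<in> {1..N}" for y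
        using P.z_pos[OF that, of 0] by simp
      have e3: "KL_unif N p = ereal (\<Sum>y\<in>{1..N}. (1 / real N) * ln ((1 / real N) / p y))"
      proof -
        have "KL_unif N p = (\<Sum>y\<in>{1..N}. ereal ((1 / real N) * ln ((1 / real N) / p y)))"
          unfolding KL_unif_def using pp by (intro sum.cong refl) (simp add: lnq_pos)
        thus ?thesis by simp
      qed
      have e4: "lnq (real N) eps = ereal (ln (real N / eps))" using eps0 by (simp add: lnq_pos)
      have KL: "real N * (\<Sum>y\<in>{1..N}. (1 / real N) * ln ((1 / real N) / p y)) = P.Psi 0 - real N * ln (real N)"
      proof -
        have N0: "real N > 0" using A(1) by simp
        have "real N * (\<Sum>y\<in>{1..N}. (1 / real N) * ln ((1 / real N) / p y))
            = (\<Sum>y\<in>{1..N}. ln ((1 / real N) / p y))"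
          using N0 by (simp add: sum_distrib_left)
        also have "\<dots> = (\<Sum>y\<in>{1..N}. - ln (p y) - ln (real N))"
        proof (intro sum.cong refl)
          fix y assume "y \<in> {1..N}"
          hence py: "p y > 0" by (rule pp)
          have "ln ((1 / real N) / p y) = ln (1 / real N) - ln (p y)" using py N0 by (intro ln_divide_pos) auto
          also have "ln (1 / real N) = - ln (real N)" using N0 by (simp add: ln_div)
          finally show "ln ((1 / real N) / p y) = - ln (p y) - ln (real N)" by simp
        qed
        also have "\<dots> = P.Psi 0 - real N * ln (real N)"
          unfolding P.Psi_def by (simp add: sum_subtractf)
        finally show ?thesis .
      qed
      have K: "P.K0 * real T \<le> (ln (1 / (1 - eps)) / ln (1 / al) + real N * ln (1 / al)
              + (real N + 1) * ln (1 / (1 - eps))) * real T"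
      proof (intro mult_right_mono)
        have "0 \<le> ln (1 / (1 - eps))" using P.le0 unfolding P.le_def .
        moreover have "0 \<le> real N * ln (1 / (1 - eps))" using calculation by simp
        ultimately show "P.K0 \<le> ln (1 / (1 - eps)) / ln (1 / al) + real N * ln (1 / al)
              + (real N + 1) * ln (1 / (1 - eps))"
          unfolding P.K0_def P.L_def P.le_def using Lp by (simp add: algebra_simps)
      qed simp
      have "(\<Sum>s\<in>{1..T}. - ln (PS al eps N p x (s - 1) (x s)))
         \<le> (\<Sum>i\<in>{1..n}. \<Sum>s\<in>{tb i..<tb (i + 1)}. - ln (ps i (x s)))
           + (ln (1 / (1 - eps)) / ln (1 / al) + real N * ln (1 / al)
              + (real N + 1) * ln (1 / (1 - eps))) * real T
           + ln (real N / eps) * (complexity_PWS N n ps / ln (1 / al))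
           + real N * (\<Sum>y\<in>{1..N}. (1 / real N) * ln ((1 / real N) / p y))"
        using M K KL unfolding P.L_def by simp
      thus ?thesis unfolding e1 e2 e3 e4 by simp
    qed
  qed
qed

end
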